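(* Let $(A,*,\odot)$ be a $\mathrm{BiCom}$-algebra and let $d$ be a linear map on $A$ which is a derivation with respect to both $*$ and $\odot$. Define $x\star y=d(x)\odot y$. Then $(A,*,\star)$ is a $\mathrm{GD}^!$-algebra.
   Context: A $\mathrm{BiCom}$-algebra is a vector space with two bilinear operations $*$ and $\odot$, each associative and commutative, satisfying $(x\odot y)*z=x\odot(y*z)$. A $\mathrm{GD}^!$-algebra is a vector space with two bilinear operations $*$ and $\star$ such that $*$ is associative and commutative, and $(x\star y)\star z-x\star(y\star z)=(x\star z)\star y-x\star(z\star y)$, $x\star(y\star z)=y\star(x\star z)$, $x\star(y*z)=(x\star y)*z$, $x\star(y*z)+y\star(x*z)=(x*y)\star z$. *)

theory Defs
  imports Main "HOL.Vector_Spaces"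
begin

definition bilinear_op :: "('k::field \<Rightarrow> 'a::ab_group_add \<Rightarrow> 'a) \<Rightarrow> ('a \<Rightarrow> 'a \<Rightarrow> 'a) \<Rightarrow> bool" where
  "bilinear_op scale m \<longleftrightarrow>
     (\<forall>y. Vector_Spaces.linear scale scale (\<lambda>x. m x y)) \<and>
     (\<forall>x. Vector_Spaces.linear scale scale (\<lambda>y. m x y))"

definition assoc_op :: "('a \<Rightarrow> 'a \<Rightarrow> 'a) \<Rightarrow> bool" where
  "assoc_op m \<longleftrightarrow> (\<forall>x y z. m (m x y) z = m x (m y z))"

definition comm_op :: "('a \<Rightarrow> 'a \<Rightarrow> 'a) \<Rightarrow> bool" where
  "comm_op m \<longleftrightarrow> (\<forall>x y. m x y = m y x)"

definition BiCom_algebra ::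
  "('k::field \<Rightarrow> 'a::ab_group_add \<Rightarrow> 'a) \<Rightarrow> ('a \<Rightarrow> 'a \<Rightarrow> 'a) \<Rightarrow> ('a \<Rightarrow> 'a \<Rightarrow> 'a) \<Rightarrow> bool" where
  "BiCom_algebra scale ast odot \<longleftrightarrow>
     vector_space scale \<and>
     bilinear_op scale ast \<and> bilinear_op scale odot \<and>
     assoc_op ast \<and> comm_op ast \<and> assoc_op odot \<and> comm_op odot \<and>
     (\<forall>x y z. ast (odot x y) z = odot x (ast y z))"

definition GD_dual_algebra ::
  "('k::field \<Rightarrow> 'a::ab_group_add \<Rightarrow> 'a) \<Rightarrow> ('a \<Rightarrow> 'a \<Rightarrow> 'a) \<Rightarrow> ('a \<Rightarrow> 'a \<Rightarrow> 'a) \<Rightarrow> bool" where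
  "GD_dual_algebra scale ast star \<longleftrightarrow>
     vector_space scale \<and>
     bilinear_op scale ast \<and> bilinear_op scale star \<and>
     assoc_op ast \<and> comm_op ast \<and>
     (\<forall>x y z. star (star x y) z - star x (star y z) = star (star x z) y - star x (star z y)) \<and>
     (\<forall>x y z. star x (star y z) = star y (star x z)) \<and>
     (\<forall>x y z. star x (ast y z) = ast (star x y) z) \<and>
     (\<forall>x y z. star x (ast y z) + star y (ast x z) = star (ast x y) z)"

definition is_derivation :: "('a::plus \<Rightarrow> 'a \<Rightarrow> 'a) \<Rightarrow> ('a \<Rightarrow> 'a) \<Rightarrow> bool" where
  "is_derivation m d \<longleftrightarrow> (\<forall>x y. d (m x y) = m (d x) y + m x (d y))"

end

theory Submission
  imports Defs
begin

theorem mainTheorem4: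
  fixes scale :: "'k::field \<Rightarrow> 'a::ab_group_add \<Rightarrow> 'a"
    and ast odot :: "'a \<Rightarrow> 'a \<Rightarrow> 'a"
    and d :: "'a \<Rightarrow> 'a"
  assumes "BiCom_algebra scale ast odot"
    and "Vector_Spaces.linear scale scale d"
    and "is_derivation ast d"
    and "is_derivation odot d"
  shows "GD_dual_algebra scale ast (\<lambda>x y. odot (d x) y)"
proof -
  from assms(1) have vs: "vector_space scale" and ba: "bilinear_op scale ast"
    and bo: "bilinear_op scale odot" and aa: "assoc_op ast" and ca: "comm_op ast"
    and ao: "\<And>x y z. odot (odot x y) z = odot x (odot y z)"
    and co: "\<And>x y. odot x y = odot y x"
    and comp: "\<And>x y z. ast (odot x y) z = odot x (ast y z)"
    unfolding BiCom_algebra_def assoc_op_def comm_op_def by auto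
  have ca': "\<And>x y. ast x y = ast y x" using ca unfolding comm_op_def by auto
  have da: "\<And>x y. d (ast x y) = ast (d x) y + ast x (d y)"
    using assms(3) unfolding is_derivation_def by auto
  have dod: "\<And>x y. d (odot x y) = odot (d x) y + odot x (d y)"
    using assms(4) unfolding is_derivation_def by auto
  from bo have l1: "\<And>y. Vector_Spaces.linear scale scale (\<lambda>x. odot x y)"
    and l2: "\<And>x. Vector_Spaces.linear scale scale (\<lambda>y. odot x y)"
    unfolding bilinear_op_def by auto
  from bo have add1: "\<And>a b c. odot (a + b) c = odot a c + odot b c"
    using l1 by (simp add: linear_iff)
  have bil: "bilinear_op scale (\<lambda>x y. odot (d x) y)"
    unfolding bilinear_op_def
  proof (intro conjI allI)
    fix y show "Vector_Spaces.linear scale scale (\<lambda>x. odot (d x) y)"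
      using Vector_Spaces.linear_compose[OF assms(2) l1[of y]] by (simp add: o_def)
  next
    fix x show "Vector_Spaces.linear scale scale (\<lambda>y. odot (d x) y)" using l2 by simp
  qed
  have key: "\<And>a y z. odot (ast a y) z = odot a (ast y z)"
  proof -
    fix a y z
    have "odot (ast a y) z = odot z (ast a y)" by (rule co)
    also have "\<dots> = ast (odot z a) y" by (rule comp[symmetric])
    also have "\<dots> = ast (odot a z) y" by (simp add: co)
    also have "\<dots> = odot a (ast z y)" by (rule comp)
    also have "\<dots> = odot a (ast y z)" by (simp add: ca')
    finally show "odot (ast a y) z = odot a (ast y z)" .
  qed
  show ?thesis
    unfolding GD_dual_algebra_def
  proof (intro conjI allI)
    show "vector_space scale" by (rule vs)
    show "bilinear_op scale ast" by (rule ba)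
    show "bilinear_op scale (\<lambda>x y. odot (d x) y)" by (rule bil)
    show "assoc_op ast" by (rule aa)
    show "comm_op ast" by (rule ca)
  next
    fix x y z
    show "odot (d (odot (d x) y)) z - odot (d x) (odot (d y) z) =
          odot (d (odot (d x) z)) y - odot (d x) (odot (d z) y)"
      by (simp add: dod add1 ao, simp add: co ao)
  next
    fix x y z
    show "odot (d x) (odot (d y) z) = odot (d y) (odot (d x) z)"
      by (metis ao co)
  next
    fix x y z
    show "odot (d x) (ast y z) = ast (odot (d x) y) z" by (simp add: comp)
  next
    fix x y z
    have "odot (d (ast x y)) z = odot (ast (d x) y) z + odot (ast x (d y)) z"
      by (simp add: da add1)
    also have "\<dots> = odot (d x) (ast y z) + odot (d y) (ast x z)"
      by (simp add: key, metis ca' key)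
    finally show "odot (d x) (ast y z) + odot (d y) (ast x z) = odot (d (ast x y)) z" by simp
  qed
qed

end
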